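(* Let $G$ be the graph consisting of countably many paths $P_1,P_2,\dots$ which pairwise have exactly one vertex $u$ in common, $u$ being the first vertex of each $P_i$, where $P_i$ has $2i$ edges; weight the edges of each $P_i$ alternately $0$ and $1$, starting with weight $0$ on the edge of $P_i$ at $u$. Then $G$ has an almost perfect matching, but $G$ has no matching that is a strongly $w$-minimal perfect or almost perfect matching.
   Context: A matching is perfect if every vertex is covered by it, and almost perfect if exactly one vertex is not covered. For a set $F$ of edges, $w[F]:=\sum_{e\in F}w(e)$. A perfect or almost perfect matching $M$ is strongly $w$-minimal (among perfect and almost perfect matchings) if there is no perfect or almost perfect matching $N$ with $|M\setminus N|,|N\setminus M|<\infty$ and $w[N\setminus M]<w[M\setminus N]$. *)

theory Defs
  imports Complex_Main
begin

text \<open>A graph is given by a vertex set V and a set E of edges, each edge a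
2-element subset of V. Weights are functions on edges.\<close>

definition matching :: "'a set set \<Rightarrow> 'a set set \<Rightarrow> bool" where
  "matching E M \<longleftrightarrow> M \<subseteq> E \<and> (\<forall>e\<in>M. \<forall>f\<in>M. e \<noteq> f \<longrightarrow> e \<inter> f = {})"

definition perfect_matching :: "'a set \<Rightarrow> 'a set set \<Rightarrow> 'a set set \<Rightarrow> bool" where
  "perfect_matching V E M \<longleftrightarrow> matching E M \<and> V \<subseteq> \<Union>M"

definition almost_perfect_matching :: "'a set \<Rightarrow> 'a set set \<Rightarrow> 'a set set \<Rightarrow> bool" where
  "almost_perfect_matching V E M \<longleftrightarrow> matching E M \<and> (\<exists>v. V - \<Union>M = {v})"

definition wsum :: "('a set \<Rightarrow> real) \<Rightarrow> 'a set set \<Rightarrow> real" where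
  "wsum w F = (\<Sum>e\<in>F. w e)"

definition strongly_w_minimal ::
  "'a set \<Rightarrow> 'a set set \<Rightarrow> ('a set \<Rightarrow> real) \<Rightarrow> 'a set set \<Rightarrow> bool" where
  "strongly_w_minimal V E w M \<longleftrightarrow>
     (perfect_matching V E M \<or> almost_perfect_matching V E M) \<and>
     \<not> (\<exists>N. (perfect_matching V E N \<or> almost_perfect_matching V E N) \<and>
            finite (M - N) \<and> finite (N - M) \<and> wsum w (N - M) < wsum w (M - N))"

text \<open>The common vertex u is (0,0); the path
P_i (i \<ge> 1) has vertices u = pv i 0, pv i 1 = (i,1), ..., pv i (2i) = (i,2i),
and edges pedge i k = {pv i k, pv i (k+1)} for k < 2i.\<close>

definition pv :: "nat \<Rightarrow> nat \<Rightarrow> nat \<times> nat" where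
  "pv i k = (if k = 0 then (0, 0) else (i, k))"

definition pedge :: "nat \<Rightarrow> nat \<Rightarrow> (nat \<times> nat) set" where
  "pedge i k = {pv i k, pv i (Suc k)}"

definition exV :: "(nat \<times> nat) set" where
  "exV = {pv i k | i k. 1 \<le> i \<and> k \<le> 2 * i}"

definition exE :: "(nat \<times> nat) set set" where
  "exE = {pedge i k | i k. 1 \<le> i \<and> k < 2 * i}"

definition exw :: "(nat \<times> nat) set \<Rightarrow> real" where
  "exw e = (if \<exists>i k. 1 \<le> i \<and> k < 2 * i \<and> odd k \<and> e = pedge i k then 1 else 0)"

end

theory Submission
  imports Defs
begin

lemma pv_in: "(a,b) \<in> pedge i t \<Longrightarrow> b \<ge> 1 \<Longrightarrow> a = i \<and> (b = t \<or> b = Suc t)"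
  by (auto simp: pedge_def pv_def split: if_splits)

lemma u_in: "(0,0) \<in> pedge i t \<longleftrightarrow> t = 0"
  by (auto simp: pedge_def pv_def)

lemma vert_in1: "t \<ge> 1 \<Longrightarrow> (i,t) \<in> pedge i t"
  by (auto simp: pedge_def pv_def)
lemma vert_in2: "(i, Suc t) \<in> pedge i t"
  by (auto simp: pedge_def pv_def)

lemma meet: "x \<in> pedge i t \<Longrightarrow> x \<in> pedge i' t' \<Longrightarrow>
   (t = 0 \<and> t' = 0) \<or> (i = i' \<and> (t = t' \<or> t = Suc t' \<or> t' = Suc t))"
  by (auto simp: pedge_def pv_def split: if_splits)

lemma pedge_inj: "pedge i t = pedge i' t' \<Longrightarrow> i = i' \<and> t = t'"
proof -
  assume h: "pedge i t = pedge i' t'"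
  have "(i, Suc t) \<in> pedge i' t'" using h vert_in2 by metis
  then have a: "i = i' \<and> (Suc t = t' \<or> Suc t = Suc t')" using pv_in by fastforce
  show ?thesis
  proof (cases "t' = Suc t")
    case True
    have "(i', Suc t') \<in> pedge i t" using h vert_in2 by metis
    then show ?thesis using pv_in[of i' "Suc t'" i t] True by auto
  qed (use a in auto)
qed

lemma exw_pedge: "1 \<le> i \<Longrightarrow> t < 2*i \<Longrightarrow> exw (pedge i t) = (if odd t then 1 else 0)"
proof -
  assume a: "1 \<le> i" "t < 2*i"
  have "(\<exists>i' k. 1 \<le> i' \<and> k < 2 * i' \<and> odd k \<and> pedge i t = pedge i' k) \<longleftrightarrow> odd t"
  proof
    assume "\<exists>i' k. 1 \<le> i' \<and> k < 2 * i' \<and> odd k \<and> pedge i t = pedge i' k"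
    then obtain i' k where "odd k" "pedge i t = pedge i' k" by blast
    then show "odd t" using pedge_inj by blast
  next
    assume "odd t" then show "\<exists>i' k. 1 \<le> i' \<and> k < 2 * i' \<and> odd k \<and> pedge i t = pedge i' k"
      using a by blast
  qed
  then show ?thesis unfolding exw_def by simp
qed

lemma exw_nonneg: "exw e \<ge> 0" by (simp add: exw_def)

lemma pedge_exE: "1 \<le> i \<Longrightarrow> t < 2*i \<Longrightarrow> pedge i t \<in> exE"
  unfolding exE_def by blast

lemma exE_form: "e \<in> exE \<Longrightarrow> \<exists>i t. 1 \<le> i \<and> t < 2*i \<and> e = pedge i t"
  by (auto simp: exE_def)

lemma exV_iff: "x \<in> exV \<longleftrightarrow> x = (0,0) \<or> (\<exists>i t. x = (i,t) \<and> 1 \<le> i \<and> 1 \<le> t \<and> t \<le> 2*i)"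
proof
  assume "x \<in> exV" then show "x = (0,0) \<or> (\<exists>i t. x = (i,t) \<and> 1 \<le> i \<and> 1 \<le> t \<and> t \<le> 2*i)"
  proof -
    assume "x \<in> exV"
    then obtain i k where ik: "x = pv i k" "1 \<le> i" "k \<le> 2*i" unfolding exV_def by blast
    show ?thesis
    proof (cases "k = 0")
      case True then show ?thesis using ik by (simp add: pv_def)
    next
      case False then show ?thesis using ik by (simp add: pv_def)
    qed
  qed
next
  assume "x = (0,0) \<or> (\<exists>i t. x = (i,t) \<and> 1 \<le> i \<and> 1 \<le> t \<and> t \<le> 2*i)"
  then show "x \<in> exV"
  proof
    assume "x = (0,0)" then have "x = pv 1 0 \<and> (1::nat) \<le> 1 \<and> (0::nat) \<le> 2*1" by (simp add: pv_def)
    then show ?thesis unfolding exV_def by blast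
  next
    assume "\<exists>i t. x = (i,t) \<and> 1 \<le> i \<and> 1 \<le> t \<and> t \<le> 2*i"
    then obtain i t where "x = (i,t)" "1 \<le> i" "1 \<le> t" "t \<le> 2*i" by blast
    then have "x = pv i t" by (simp add: pv_def)
    then show ?thesis unfolding exV_def using \<open>1 \<le> i\<close> \<open>t \<le> 2*i\<close> by blast
  qed
qed

lemma cov: "matching exE M \<Longrightarrow> (i,t) \<in> \<Union>M \<Longrightarrow> t \<ge> 1 \<Longrightarrow>
   pedge i (t-1) \<in> M \<or> (pedge i t \<in> M \<and> t < 2*i)"
proof -
  assume m: "matching exE M" and c: "(i,t) \<in> \<Union>M" and t: "t \<ge> 1"
  obtain e where e: "e \<in> M" "(i,t) \<in> e" using c by blast
  then have "e \<in> exE" using m by (auto simp: matching_def)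
  then obtain i' s where s: "1 \<le> i'" "s < 2*i'" "e = pedge i' s" using exE_form by blast
  then have "i = i' \<and> (t = s \<or> t = Suc s)" using pv_in e t by blast
  then show ?thesis using s e by auto
qed

lemma adj: "matching exE M \<Longrightarrow> pedge i a \<in> M \<Longrightarrow> pedge i (Suc a) \<in> M \<Longrightarrow> False"
proof -
  assume m: "matching exE M" "pedge i a \<in> M" "pedge i (Suc a) \<in> M"
  have ne: "pedge i a \<noteq> pedge i (Suc a)" using pedge_inj[of i a i "Suc a"] by auto
  have "(i, Suc a) \<in> pedge i a" by (rule vert_in2)
  moreover have "(i, Suc a) \<in> pedge i (Suc a)" by (rule vert_in1) simp
  moreover have "pedge i a \<inter> pedge i (Suc a) = {}"
    using m ne unfolding matching_def by blast
  ultimately show False by blast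
qed

lemma fwd:
  assumes m: "matching exE M" and z: "pedge i 0 \<notin> M"
  shows "(\<forall>t. 1 \<le> t \<and> t \<le> 2*s+1 \<longrightarrow> (i,t) \<in> \<Union>M) \<Longrightarrow> pedge i (2*s+1) \<in> M"
proof (induction s)
  case 0
  then have "(i,1) \<in> \<Union>M" by simp
  from cov[OF m this] show ?case using z by auto
next
  case (Suc s)
  then have ih: "pedge i (2*s+1) \<in> M" by simp
  have c: "(i, 2*s+3) \<in> \<Union>M" using Suc.prems by simp
  have c3: "(1::nat) \<le> 2*s+3" by simp
  from cov[OF m c c3] have "pedge i (2*s+3-1) \<in> M \<or> pedge i (2*s+3) \<in> M" by blast
  moreover have e: "2*s+3-1 = Suc (2*s+1)" by simp
  ultimately have "pedge i (Suc (2*s+1)) \<in> M \<or> pedge i (2*s+3) \<in> M" by simp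
  then show ?case
  proof
    assume "pedge i (Suc (2*s+1)) \<in> M"
    with adj[OF m ih] show ?thesis by blast
  next
    assume h: "pedge i (2*s+3) \<in> M"
    have eq: "2*Suc s+1 = 2*s+3" by simp
    show ?thesis unfolding eq using h .
  qed
qed

lemma bwd:
  assumes m: "matching exE M"
  shows "d < i \<Longrightarrow> (\<forall>t. 2*(i-d) \<le> t \<and> t \<le> 2*i \<longrightarrow> (i,t) \<in> \<Union>M) \<Longrightarrow> pedge i (2*(i-d)-1) \<in> M"
proof (induction d)
  case 0
  then have "(i,2*i) \<in> \<Union>M" by simp
  from cov[OF m this] 0 show ?case by simp
next
  case (Suc d)
  have "\<forall>t. 2*(i-d) \<le> t \<and> t \<le> 2*i \<longrightarrow> (i,t) \<in> \<Union>M"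
  proof (intro allI impI)
    fix t assume "2*(i-d) \<le> t \<and> t \<le> 2*i"
    then have "2*(i - Suc d) \<le> t \<and> t \<le> 2*i" by arith
    then show "(i,t) \<in> \<Union>M" using Suc.prems(2) by blast
  qed
  then have ih: "pedge i (2*(i-d)-1) \<in> M" using Suc.IH Suc.prems(1) by simp
  define t0 where "t0 = 2*(i - Suc d)"
  have t0: "t0 \<ge> 2" "Suc t0 = 2*(i-d)-1" "t0 - 1 = 2*(i - Suc d) - 1"
    using Suc.prems(1) unfolding t0_def by auto
  have "(i, t0) \<in> \<Union>M" using Suc.prems unfolding t0_def by auto
  from cov[OF m this] t0 have "pedge i (t0-1) \<in> M \<or> pedge i t0 \<in> M" by auto
  then show ?case
  proof
    assume "pedge i t0 \<in> M"
    with adj[OF m this] ih t0 show ?thesis by simp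
  qed (use t0 in simp)
qed

lemma nohole:
  assumes m: "matching exE M" and i: "1 \<le> i" and z: "pedge i 0 \<notin> M"
    and t: "1 \<le> t" "t \<le> 2*i"
    and others: "\<forall>t'. 1 \<le> t' \<and> t' \<le> 2*i \<and> t' \<noteq> t \<longrightarrow> (i,t') \<in> \<Union>M"
  shows "(i,t) \<in> \<Union>M"
proof (cases "even t")
  case True
  define s where "s = t div 2 - 1"
  have s: "t = 2*s+2" using True t(1) unfolding s_def by presburger
  have "pedge i (2*s+1) \<in> M" using fwd[OF m z, of s] others s t by auto
  moreover have "(i,t) \<in> pedge i (2*s+1)" using vert_in2[of i "2*s+1"] s by simp
  ultimately show ?thesis by blast
next
  case False
  then obtain s where s: "t = 2*s+1" using oddE by blast
  define d where "d = i - s - 1"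
  have d: "d < i" "2*(i-d) = 2*s+2" using s t i unfolding d_def by auto
  have "pedge i (2*(i-d)-1) \<in> M" using bwd[OF m d(1)] others d s by auto
  moreover have "(i,t) \<in> pedge i (2*s+1)" using vert_in1[of t i] s by simp
  ultimately show ?thesis using d by auto
qed

lemma p10: "pedge 1 0 = {(0,0),(1,1)}" by (simp add: pedge_def pv_def)
lemma p11: "pedge 1 1 = {(1,1),(1,2)}" by (simp add: pedge_def pv_def numeral_2_eq_2)

lemma path_full:
  assumes m: "matching exE M" and v: "exV - \<Union>M \<subseteq> {v}" and j: "1 \<le> j" "pedge j 0 \<in> M"
    and k: "1 \<le> k" "k \<noteq> j"
  shows "\<forall>t. 1 \<le> t \<and> t \<le> 2*k \<longrightarrow> (k,t) \<in> \<Union>M"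
proof (intro allI impI, rule ccontr)
  fix t assume t: "1 \<le> t \<and> t \<le> 2*k" and nc: "(k,t) \<notin> \<Union>M"
  have z: "pedge k 0 \<notin> M"
  proof
    assume a: "pedge k 0 \<in> M"
    have ne: "pedge k 0 \<noteq> pedge j 0" using pedge_inj k by blast
    have "(0,0) \<in> pedge k 0 \<inter> pedge j 0" using u_in by blast
    then show False using m a j ne unfolding matching_def by blast
  qed
  have "(k,t) \<in> exV" using exV_iff k t by blast
  then have kv: "(k,t) = v" using v nc by blast
  have others: "\<forall>t'. 1 \<le> t' \<and> t' \<le> 2*k \<and> t' \<noteq> t \<longrightarrow> (k,t') \<in> \<Union>M"
  proof (intro allI impI)
    fix t' assume a: "1 \<le> t' \<and> t' \<le> 2*k \<and> t' \<noteq> t"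
    then have "(k,t') \<in> exV" using exV_iff k by blast
    moreover have "(k,t') \<noteq> v" using kv a by auto
    ultimately show "(k,t') \<in> \<Union>M" using v by blast
  qed
  have "(k,t) \<in> \<Union>M" using nohole[OF m k(1) z _ _ others] t by blast
  then show False using nc by blast
qed

lemma case1:
  assumes m: "matching exE M" and v: "exV - \<Union>M \<subseteq> {v}" and u: "(0,0) \<notin> \<Union>M"
  shows "\<exists>N. almost_perfect_matching exV exE N \<and> finite (M - N) \<and> finite (N - M) \<and>
             wsum exw (N - M) < wsum exw (M - N)"
proof -
  have Mex: "M \<subseteq> exE" using m unfolding matching_def by blast
  have "(0,0) \<in> exV" using exV_iff by blast
  then have vu: "v = (0,0)" using v u by blast
  have "(1,1) \<in> exV" using exV_iff[of "(1,1)"] by simp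
  have c11: "(1,1) \<in> \<Union>M"
  proof (rule ccontr)
    assume "(1,1) \<notin> \<Union>M"
    then have "(1,1) \<in> exV - \<Union>M" using \<open>(1,1) \<in> exV\<close> by blast
    then have "(1,1) \<in> {v}" using v by (rule subsetD[rotated])
    then show False using vu by simp
  qed
  have p10M: "pedge 1 0 \<notin> M"
  proof
    assume "pedge 1 0 \<in> M"
    moreover have "(0,0) \<in> pedge 1 0" by (simp add: u_in)
    ultimately show False using u by blast
  qed
  have p11M: "pedge 1 1 \<in> M" using cov[OF m c11] p10M by simp
  define N where "N = insert (pedge 1 0) (M - {pedge 1 1})"
  have ne: "pedge 1 0 \<noteq> pedge 1 1" using pedge_inj[of 1 0 1 1] by auto
  have NM: "N - M = {pedge 1 0}" using p10M ne unfolding N_def by blast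
  have MN: "M - N = {pedge 1 1}" using p11M ne unfolding N_def by blast
  have w0: "exw (pedge 1 0) = 0" using exw_pedge[of 1 0] by simp
  have w1: "exw (pedge 1 1) = 1" using exw_pedge[of 1 1] by simp
  have match: "matching exE N"
    unfolding matching_def
  proof (intro conjI ballI impI)
    show "N \<subseteq> exE" using Mex pedge_exE[of 1 0] unfolding N_def by auto
  next
    fix e f assume e: "e \<in> N" and f: "f \<in> N" and ef: "e \<noteq> f"
    have key: "g \<in> M - {pedge 1 1} \<Longrightarrow> pedge 1 0 \<inter> g = {}" for g
    proof (rule ccontr)
      assume g: "g \<in> M - {pedge 1 1}" and "pedge 1 0 \<inter> g \<noteq> {}"
      then obtain x where x: "x \<in> pedge 1 0" "x \<in> g" by blast
      show False
      proof (cases "x = (0,0)")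
        case True then show False using x g u by blast
      next
        case False
        then have "x = (1,1)" using x p10 by blast
        then have "x \<in> pedge 1 1 \<inter> g" using x p11 by blast
        then show False using m g p11M unfolding matching_def by blast
      qed
    qed
    show "e \<inter> f = {}"
    proof (cases "e = pedge 1 0")
      case True then show ?thesis using key f ef unfolding N_def by blast
    next
      case False
      note eF = False
      show ?thesis
      proof (cases "f = pedge 1 0")
        case True then show ?thesis using key[of e] e eF unfolding N_def by blast
      next
        case False
        then have "e \<in> M" "f \<in> M" using e f eF unfolding N_def by auto
        then show ?thesis using m ef unfolding matching_def by blast
      qed
    qed
  qed
  have "exV - \<Union>N = {(1,2)}"
  proof
    show "exV - \<Union>N \<subseteq> {(1,2)}"
    proof
      fix x assume x: "x \<in> exV - \<Union>N"
      show "x \<in> {(1,2)}"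
      proof (rule ccontr)
        assume x12: "x \<notin> {(1,2)}"
        have "pedge 1 0 \<in> N" unfolding N_def by blast
        then have "x \<notin> pedge 1 0" using x by blast
        then have x0: "x \<noteq> (0,0)" "x \<noteq> (1,1)" unfolding p10 by blast+
        then have "x \<in> \<Union>M" using v vu x by blast
        then obtain g where g: "g \<in> M" "x \<in> g" by blast
        have "x \<notin> pedge 1 1" unfolding p11 using x0 x12 by blast
        then have "g \<noteq> pedge 1 1" using g by blast
        then have "g \<in> N" using g unfolding N_def by blast
        then show False using g x by blast
      qed
    qed
  next
    have "(1,2) \<in> exV" using exV_iff[of "(1,2)"] by simp
    moreover have "(1::nat,2::nat) \<notin> \<Union>N"
    proof
      assume "(1::nat,2::nat) \<in> \<Union>N"
      then obtain g where g: "g \<in> N" "(1::nat,2::nat) \<in> g" by blast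
      show False
      proof (cases "g = pedge 1 0")
        case True then show False using g p10 by simp
      next
        case False
        then have gM: "g \<in> M" "g \<noteq> pedge 1 1" using g unfolding N_def by blast+
        then obtain i s where iss: "1 \<le> i" "s < 2*i" "g = pedge i s" using Mex exE_form by blast
        have "(1::nat,2::nat) \<in> pedge i s" using g iss by blast
        from pv_in[OF this] have "1 = i \<and> (2 = s \<or> 2 = Suc s)" by linarith
        then have "i = 1" "s = 1" using iss by auto
        then show False using iss gM by blast
      qed
    qed
    ultimately show "{(1,2)} \<subseteq> exV - \<Union>N" by blast
  qed
  then have "almost_perfect_matching exV exE N" using match unfolding almost_perfect_matching_def by blast
  moreover have "wsum exw (N - M) < wsum exw (M - N)" unfolding NM MN wsum_def using w0 w1 by simp
  ultimately show ?thesis using NM MN by auto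
qed

lemma odd_odd: "x \<in> pedge j (2*r+1) \<Longrightarrow> x \<in> pedge j' (2*r'+1) \<Longrightarrow> j = j' \<and> r = r'"
proof -
  assume a: "x \<in> pedge j (2*r+1)" "x \<in> pedge j' (2*r'+1)"
  from meet[OF a] have "j = j' \<and> (2*r+1 = 2*r'+1 \<or> 2*r+1 = Suc (2*r'+1) \<or> 2*r'+1 = Suc (2*r+1))" by simp
  then show ?thesis by presburger
qed

lemma ev_ev: "x \<in> pedge k (2*r) \<Longrightarrow> x \<in> pedge k (2*r') \<Longrightarrow> r = r'"
proof -
  assume a: "x \<in> pedge k (2*r)" "x \<in> pedge k (2*r')"
  from meet[OF a] have "(2*r = 0 \<and> 2*r' = 0) \<or> (2*r = 2*r' \<or> 2*r = Suc (2*r') \<or> 2*r' = Suc (2*r))" by simp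
  then show ?thesis by presburger
qed

lemma odd_ev: "x \<in> pedge j (2*r+1) \<Longrightarrow> x \<in> pedge k (2*r') \<Longrightarrow> j = k"
proof -
  assume a: "x \<in> pedge j (2*r+1)" "x \<in> pedge k (2*r')"
  from meet[OF a] have "j = k \<and> (2*r+1 = 2*r' \<or> 2*r+1 = Suc (2*r') \<or> 2*r' = Suc (2*r+1))" by simp
  then show ?thesis by blast
qed

lemma case2:
  assumes m: "matching exE M" and v: "exV - \<Union>M \<subseteq> {v}" and j: "1 \<le> j" "pedge j 0 \<in> M"
  shows "\<exists>N. almost_perfect_matching exV exE N \<and> finite (M - N) \<and> finite (N - M) \<and>
             wsum exw (N - M) < wsum exw (M - N)"
proof -
  define k where "k = Suc j"
  have k: "1 \<le> k" "k \<noteq> j" "j < k" unfolding k_def by auto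
  have Mex: "M \<subseteq> exE" using m unfolding matching_def by blast
  define Ej where "Ej = pedge j ` {..<2*j}"
  define Ek where "Ek = pedge k ` {..<2*k}"
  define Oj where "Oj = (\<lambda>r. pedge j (2*r+1)) ` {..<j}"
  define Ok where "Ok = (\<lambda>r. pedge k (2*r+1)) ` {..<k}"
  define Ev where "Ev = (\<lambda>r. pedge k (2*r)) ` {..<k}"
  define N where "N = (M - Ej - Ek) \<union> Oj \<union> Ev"
  have inEj: "i = j" if h: "pedge i s \<in> Ej" for i s
  proof -
    obtain s' where "pedge i s = pedge j s'" using h unfolding Ej_def by blast
    then show ?thesis using pedge_inj by blast
  qed
  have inEk: "i = k" if h: "pedge i s \<in> Ek" for i s
  proof -
    obtain s' where "pedge i s = pedge k s'" using h unfolding Ek_def by blast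
    then show ?thesis using pedge_inj by blast
  qed
  have pathM: "(i,t) \<in> \<Union>M" if "1 \<le> i" "i \<noteq> j" "1 \<le> t" "t \<le> 2*i" for i t
    using path_full[OF m v j that(1,2)] that(3,4) by blast
  have OkM: "Ok \<subseteq> M"
  proof
    fix e assume "e \<in> Ok"
    then obtain r where r: "r < k" "e = pedge k (2*r+1)" unfolding Ok_def by blast
    define d where "d = k - r - 1"
    have d: "d < k" "2*(k-d)-1 = 2*r+1" "2*(k-d) = 2*r+2" using r k unfolding d_def by auto
    have "\<forall>t. 2*(k-d) \<le> t \<and> t \<le> 2*k \<longrightarrow> (k,t) \<in> \<Union>M"
      using pathM[OF k(1) k(2)] d by auto
    from bwd[OF m d(1) this] show "e \<in> M" using d r by simp
  qed
  have OkN: "Ok \<inter> N = {}"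
  proof (rule ccontr)
    assume "Ok \<inter> N \<noteq> {}"
    then obtain e where e: "e \<in> Ok" "e \<in> N" by blast
    then obtain r where r: "r < k" "e = pedge k (2*r+1)" unfolding Ok_def by blast
    have "e \<in> Ek" unfolding Ek_def using r by auto
    then have "e \<in> Oj \<or> e \<in> Ev" using e unfolding N_def by blast
    then show False
    proof
      assume "e \<in> Oj"
      then obtain r' where "pedge k (2*r+1) = pedge j (2*r'+1)" using r unfolding Oj_def by blast
      then show False using pedge_inj k by blast
    next
      assume "e \<in> Ev"
      then obtain r' where "pedge k (2*r+1) = pedge k (2*r')" using r unfolding Ev_def by blast
      then have "2*r+1 = 2*r'" using pedge_inj by blast
      then show False by presburger
    qed
  qed
  have finE: "finite Ej" "finite Ek" "finite Oj" "finite Ok" "finite Ev"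
    unfolding Ej_def Ek_def Oj_def Ok_def Ev_def by auto
  have MNsub: "M - N \<subseteq> Ej \<union> Ek" unfolding N_def by blast
  have NMsub: "N - M \<subseteq> Oj \<union> Ev" unfolding N_def by blast
  have finMN: "finite (M - N)" using finite_subset[OF MNsub] finE by blast
  have finNM: "finite (N - M)" using finite_subset[OF NMsub] finE by blast
  have wEv: "exw e = 0" if h: "e \<in> Ev" for e
  proof -
    obtain r where r: "r < k" "e = pedge k (2*r)" using h unfolding Ev_def by blast
    then show ?thesis using exw_pedge[of k "2*r"] k by simp
  qed
  have wOj: "exw e = 1" if h: "e \<in> Oj" for e
  proof -
    obtain r where r: "r < j" "e = pedge j (2*r+1)" using h unfolding Oj_def by blast
    then show ?thesis using exw_pedge[of j "2*r+1"] j by simp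
  qed
  have wOk: "exw e = 1" if h: "e \<in> Ok" for e
  proof -
    obtain r where r: "r < k" "e = pedge k (2*r+1)" using h unfolding Ok_def by blast
    then show ?thesis using exw_pedge[of k "2*r+1"] k by simp
  qed
  have "inj_on (\<lambda>r. pedge k (2*r+1)) {..<k}"
  proof (rule inj_onI)
    fix x y assume "pedge k (2*x+1) = pedge k (2*y+1)"
    then have "2*x+1 = 2*y+1" using pedge_inj by blast
    then show "x = y" by simp
  qed
  then have cardOk: "card Ok = k" unfolding Ok_def by (simp add: card_image)
  have cardOj: "card Oj \<le> j" unfolding Oj_def using card_image_le[of "{..<j}"] by simp
  have sOj: "sum exw Oj = real (card Oj)"
  proof -
    have "sum exw Oj = (\<Sum>e\<in>Oj. 1)" by (rule sum.cong) (auto simp: wOj)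
    then show ?thesis by simp
  qed
  have sOk: "sum exw Ok = real k"
  proof -
    have "sum exw Ok = (\<Sum>e\<in>Ok. 1)" by (rule sum.cong) (auto simp: wOk)
    then show ?thesis using cardOk by simp
  qed
  have sEv: "sum exw Ev = 0" by (rule sum.neutral) (auto simp: wEv)
  have "wsum exw (N - M) \<le> sum exw (Oj \<union> Ev)"
    unfolding wsum_def by (rule sum_mono2) (use finE NMsub exw_nonneg in auto)
  also have "\<dots> \<le> sum exw Oj + sum exw Ev"
  proof -
    have "sum exw (Oj \<union> Ev) + sum exw (Oj \<inter> Ev) = sum exw Oj + sum exw Ev"
      by (rule sum.union_inter) (use finE in auto)
    moreover have "sum exw (Oj \<inter> Ev) \<ge> 0" by (rule sum_nonneg) (simp add: exw_nonneg)
    ultimately show ?thesis by linarith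
  qed
  also have "\<dots> \<le> real j" using sOj sEv cardOj by simp
  also have "\<dots> < real k" using k by simp
  also have "real k \<le> wsum exw (M - N)"
  proof -
    have "Ok \<subseteq> M - N" using OkM OkN by blast
    then have "sum exw Ok \<le> sum exw (M - N)"
      by (rule sum_mono2[OF finMN]) (simp add: exw_nonneg)
    then show ?thesis using sOk unfolding wsum_def by simp
  qed
  finally have wlt: "wsum exw (N - M) < wsum exw (M - N)" .
  have cls: "g \<in> M - Ej - Ek \<or> (\<exists>r<j. g = pedge j (2*r+1)) \<or> (\<exists>r<k. g = pedge k (2*r))" if "g \<in> N" for g
    using that unfolding N_def Oj_def Ev_def by blast
  have hAO: False if h: "g \<in> M - Ej - Ek" "x \<in> g" "x \<in> pedge j (2*r+1)" for g x r
  proof -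
    obtain i s where is': "1 \<le> i" "s < 2*i" "g = pedge i s" using h(1) Mex exE_form by blast
    from meet[of x i s j "2*r+1"] h is' have "i = j" by auto
    then have "g \<in> Ej" unfolding Ej_def using is' by auto
    then show False using h by blast
  qed
  have hAE: False if h: "g \<in> M - Ej - Ek" "x \<in> g" "x \<in> pedge k (2*r)" for g x r
  proof -
    obtain i s where is': "1 \<le> i" "s < 2*i" "g = pedge i s" using h(1) Mex exE_form by blast
    from meet[of x i s k "2*r"] h is' have "(s = 0 \<and> r = 0) \<or> i = k" by auto
    then show False
    proof
      assume "s = 0 \<and> r = 0"
      then have "(0,0) \<in> g" "(0,0) \<in> pedge j 0" using is' u_in by auto
      then have "g = pedge j 0" using m j h(1) unfolding matching_def by blast
      then have "g \<in> Ej" unfolding Ej_def using j by auto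
      then show False using h by blast
    next
      assume "i = k"
      then have "g \<in> Ek" unfolding Ek_def using is' by auto
      then show False using h by blast
    qed
  qed
  have match: "matching exE N"
    unfolding matching_def
  proof (intro conjI ballI impI)
    show "N \<subseteq> exE"
    proof
      fix g assume "g \<in> N"
      from cls[OF this] show "g \<in> exE"
      proof (elim disjE exE conjE)
        assume "g \<in> M - Ej - Ek" then show ?thesis using Mex by blast
      next
        fix r assume "r < j" "g = pedge j (2*r+1)" then show ?thesis using pedge_exE j by simp
      next
        fix r assume "r < k" "g = pedge k (2*r)" then show ?thesis using pedge_exE k by simp
      qed
    qed
  next
    fix e f assume e: "e \<in> N" and f: "f \<in> N" and ef: "e \<noteq> f"
    show "e \<inter> f = {}"
    proof (rule ccontr)
      assume "e \<inter> f \<noteq> {}"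
      then obtain x where x: "x \<in> e" "x \<in> f" by blast
      from cls[OF e] show False
      proof (elim disjE exE conjE)
        assume eA: "e \<in> M - Ej - Ek"
        from cls[OF f] show False
        proof (elim disjE exE conjE)
          assume "f \<in> M - Ej - Ek" then show False using eA m ef x unfolding matching_def by blast
        next
          fix r assume "r < j" "f = pedge j (2*r+1)" then show False using hAO[OF eA x(1)] x by blast
        next
          fix r assume "r < k" "f = pedge k (2*r)" then show False using hAE[OF eA x(1)] x by blast
        qed
      next
        fix r assume er: "r < j" "e = pedge j (2*r+1)"
        from cls[OF f] show False
        proof (elim disjE exE conjE)
          assume "f \<in> M - Ej - Ek" then show False using hAO[OF _ x(2)] er x by blast
        next
          fix r' assume "r' < j" "f = pedge j (2*r'+1)"
          then show False using odd_odd[of x j r j r'] er x ef by blast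
        next
          fix r' assume "r' < k" "f = pedge k (2*r')"
          then show False using odd_ev[of x j r k r'] er x k by blast
        qed
      next
        fix r assume er: "r < k" "e = pedge k (2*r)"
        from cls[OF f] show False
        proof (elim disjE exE conjE)
          assume "f \<in> M - Ej - Ek" then show False using hAE[OF _ x(2)] er x by blast
        next
          fix r' assume "r' < j" "f = pedge j (2*r'+1)"
          then show False using odd_ev[of x j r' k r] er x k by blast
        next
          fix r' assume "r' < k" "f = pedge k (2*r')"
          then show False using ev_ev[of x k r r'] er x ef by blast
        qed
      qed
    qed
  qed
  have cov1: "x \<in> \<Union>N" if x: "x \<in> exV" "x \<noteq> (k, 2*k)" for x
  proof -
    from x(1) have "x = (0,0) \<or> (\<exists>i t. x = (i,t) \<and> 1 \<le> i \<and> 1 \<le> t \<and> t \<le> 2*i)"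
      by (simp only: exV_iff)
    then consider "x = (0,0)" | i t where "x = (i,t)" "1 \<le> i" "1 \<le> t" "t \<le> 2*i"
      by blast
    then show ?thesis
    proof cases
      case 1
      have "(0::nat) \<in> {..<k}" using k by simp
      then have "pedge k (2*0) \<in> Ev" unfolding Ev_def by (rule imageI)
      moreover have "(0,0) \<in> pedge k (2*0)" using u_in by simp
      ultimately show ?thesis unfolding N_def using 1 by blast
    next
      case 2
      note it = 2
      show ?thesis
      proof (cases "i = j")
        case True
        show ?thesis
        proof (cases "odd t")
          case True
          then obtain r where r: "t = 2*r+1" using oddE by blast
          then have "r < j" using it \<open>i = j\<close> by simp
          then have "pedge j (2*r+1) \<in> N" unfolding N_def Oj_def by blast
          moreover have "x \<in> pedge j (2*r+1)" using vert_in1[of t j] it r \<open>i = j\<close> by simp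
          ultimately show ?thesis by blast
        next
          case False
          define r where "r = t div 2 - 1"
          have r: "t = 2*r+2" using False it unfolding r_def by presburger
          then have "r < j" using it \<open>i = j\<close> by simp
          then have "pedge j (2*r+1) \<in> N" unfolding N_def Oj_def by blast
          moreover have "x \<in> pedge j (2*r+1)" using vert_in2[of j "2*r+1"] it r \<open>i = j\<close> by simp
          ultimately show ?thesis by blast
        qed
      next
        case False
        note ij = False
        show ?thesis
        proof (cases "i = k")
          case True
          then have tk: "t < 2*k" using it x(2) by auto
          show ?thesis
          proof (cases "even t")
            case True
            then obtain r where r: "t = 2*r" by blast
            then have "r < k" using tk by simp
            then have "pedge k (2*r) \<in> N" unfolding N_def Ev_def by blast
            moreover have "x \<in> pedge k (2*r)" using vert_in1[of t k] it r \<open>i = k\<close> by simp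
            ultimately show ?thesis by blast
          next
            case False
            then obtain r where r: "t = 2*r+1" using oddE by blast
            then have "r < k" using tk by simp
            then have "pedge k (2*r) \<in> N" unfolding N_def Ev_def by blast
            moreover have "x \<in> pedge k (2*r)" using vert_in2[of k "2*r"] it r \<open>i = k\<close> by simp
            ultimately show ?thesis by blast
          qed
        next
          case False
          have "(i,t) \<in> \<Union>M" using pathM[of i t] it ij by blast
          then obtain g where g: "g \<in> M" "(i,t) \<in> g" by blast
          then obtain i' s where is': "1 \<le> i'" "s < 2*i'" "g = pedge i' s" using Mex exE_form by blast
          have "(i,t) \<in> pedge i' s" using g is' by simp
          from pv_in[OF this] it have ii: "i = i'" by simp
          have "g \<notin> Ej"
          proof
            assume "g \<in> Ej" then have "i' = j" using inEj is'(3) by simp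
            then show False using ii ij by simp
          qed
          moreover have "g \<notin> Ek"
          proof
            assume "g \<in> Ek" then have "i' = k" using inEk is'(3) by simp
            then show False using ii False by simp
          qed
          ultimately have "g \<in> N" using g unfolding N_def by blast
          then show ?thesis using g it by blast
        qed
      qed
    qed
  qed
  have nc: "(k, 2*k) \<notin> \<Union>N"
  proof
    assume "(k, 2*k) \<in> \<Union>N"
    then obtain g where g: "g \<in> N" "(k, 2*k) \<in> g" by blast
    from cls[OF g(1)] show False
    proof (elim disjE exE conjE)
      assume gA: "g \<in> M - Ej - Ek"
      obtain i s where is': "1 \<le> i" "s < 2*i" "g = pedge i s" using gA Mex exE_form by blast
      have "i = k" using pv_in[of k "2*k" i s] g is' k by auto
      then have "g \<in> Ek" unfolding Ek_def using is' by auto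
      then show False using gA by blast
    next
      fix r assume "r < j" "g = pedge j (2*r+1)"
      then show False using pv_in[of k "2*k" j "2*r+1"] g k by auto
    next
      fix r assume r: "r < k" "g = pedge k (2*r)"
      then have "2*k = 2*r \<or> 2*k = Suc (2*r)" using pv_in[of k "2*k" k "2*r"] g k by auto
      then show False using r(1) by presburger
    qed
  qed
  have "(k, 2*k) \<in> exV" using exV_iff k by auto
  then have "exV - \<Union>N = {(k, 2*k)}" using cov1 nc by blast
  then have "almost_perfect_matching exV exE N" using match unfolding almost_perfect_matching_def by blast
  then show ?thesis using finMN finNM wlt by blast
qed

lemma exists_apm: "\<exists>M. almost_perfect_matching exV exE M"
proof -
  define M0 where "M0 = {pedge i t | i t. 1 \<le> i \<and> t < 2*i \<and> odd t}"
  have match: "matching exE M0"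
    unfolding matching_def
  proof (intro conjI ballI impI)
    show "M0 \<subseteq> exE" unfolding M0_def exE_def by blast
  next
    fix e f assume e: "e \<in> M0" and f: "f \<in> M0" and ef: "e \<noteq> f"
    obtain i t where et: "e = pedge i t" "odd t" using e unfolding M0_def by blast
    obtain i' t' where ft: "f = pedge i' t'" "odd t'" using f unfolding M0_def by blast
    obtain r where r: "t = 2*r+1" using et(2) oddE by blast
    obtain r' where r': "t' = 2*r'+1" using ft(2) oddE by blast
    show "e \<inter> f = {}"
    proof (rule ccontr)
      assume "e \<inter> f \<noteq> {}"
      then obtain x where "x \<in> pedge i (2*r+1)" "x \<in> pedge i' (2*r'+1)" using et ft r r' by blast
      from odd_odd[OF this] have "e = f" using et ft r r' by simp
      then show False using ef by simp
    qed
  qed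
  have "exV - \<Union>M0 = {(0,0)}"
  proof
    show "exV - \<Union>M0 \<subseteq> {(0,0)}"
    proof
      fix x assume x: "x \<in> exV - \<Union>M0"
      then have "x = (0,0) \<or> (\<exists>i t. x = (i,t) \<and> 1 \<le> i \<and> 1 \<le> t \<and> t \<le> 2*i)"
        by (simp only: exV_iff Diff_iff)
      then show "x \<in> {(0,0)}"
      proof (elim disjE exE conjE)
        assume "x = (0,0)" then show ?thesis by simp
      next
        fix i t assume it: "x = (i,t)" "1 \<le> i" "1 \<le> t" "t \<le> 2*i"
        have "x \<in> \<Union>M0"
        proof (cases "odd t")
          case True
          then have "t < 2*i" using it by presburger
          then have "pedge i t \<in> M0" unfolding M0_def using it True by blast
          moreover have "x \<in> pedge i t" using vert_in1[of t i] it by simp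
          ultimately show ?thesis by blast
        next
          case False
          define r where "r = t div 2 - 1"
          have r: "t = 2*r+2" using False it unfolding r_def by presburger
          then have "2*r+1 < 2*i" using it by simp
          moreover have "odd (2*r+1)" by simp
          ultimately have "pedge i (2*r+1) \<in> M0" unfolding M0_def using it by blast
          moreover have "x \<in> pedge i (2*r+1)" using vert_in2[of i "2*r+1"] it r by simp
          ultimately show ?thesis by blast
        qed
        then show ?thesis using x by blast
      qed
    qed
  next
    have "(0,0) \<in> exV" using exV_iff by blast
    moreover have "(0,0) \<notin> \<Union>M0"
    proof
      assume "(0,0) \<in> \<Union>M0"
      then obtain i t where "(0,0) \<in> pedge i t" "odd t" unfolding M0_def by blast
      then show False using u_in by simp
    qed
    ultimately show "{(0,0)} \<subseteq> exV - \<Union>M0" by blast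
  qed
  then show ?thesis using match unfolding almost_perfect_matching_def by blast
qed

theorem mainTheorem7:
  shows "(\<exists>M. almost_perfect_matching exV exE M) \<and>
         \<not> (\<exists>M. strongly_w_minimal exV exE exw M)"
proof
  show "\<exists>M. almost_perfect_matching exV exE M" by (rule exists_apm)
next
  show "\<not> (\<exists>M. strongly_w_minimal exV exE exw M)"
  proof
    assume "\<exists>M. strongly_w_minimal exV exE exw M"
    then obtain M where sm: "strongly_w_minimal exV exE exw M" by blast
    have pm: "perfect_matching exV exE M \<or> almost_perfect_matching exV exE M"
      and no: "\<not> (\<exists>N. (perfect_matching exV exE N \<or> almost_perfect_matching exV exE N) \<and>
            finite (M - N) \<and> finite (N - M) \<and> wsum exw (N - M) < wsum exw (M - N))"
      using sm unfolding strongly_w_minimal_def by blast+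
    have m: "matching exE M" using pm unfolding perfect_matching_def almost_perfect_matching_def by blast
    obtain v where v: "exV - \<Union>M \<subseteq> {v}"
      using pm unfolding perfect_matching_def almost_perfect_matching_def by blast
    have "\<exists>N. almost_perfect_matching exV exE N \<and> finite (M - N) \<and> finite (N - M) \<and>
             wsum exw (N - M) < wsum exw (M - N)"
    proof (cases "(0,0) \<in> \<Union>M")
      case True
      then obtain e where e: "e \<in> M" "(0,0) \<in> e" by blast
      then have "e \<in> exE" using m unfolding matching_def by blast
      then obtain j s where js: "1 \<le> j" "s < 2*j" "e = pedge j s" using exE_form by blast
      then have "s = 0" using e u_in by simp
      then have "pedge j 0 \<in> M" using e js by simp
      then show ?thesis using case2[OF m v js(1)] by blast
    next
      case False
      then show ?thesis using case1[OF m v] by blast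
    qed
    then show False using no by blast
  qed
qed

end
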